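(* Let $\lambda\in\mathbb{R}$, $\alpha=1-\lambda$, and let $\mathcal{Q}_\lambda$ be the $\lambda$-exponential family with sufficient statistic $T$ and base measure $m$. Assume that $\alpha>0$ and that $\varphi_\lambda$ is proper. Let $\vartheta\in\operatorname{dom}\varphi_\lambda$ and $p\in\mathcal{P}(\mathcal{X},m)$. If $p$ is $q_\vartheta$-compatible, then $c_\lambda\big(\vartheta,\,p^{(\alpha)}_{|S_\vartheta}(T)\big)\in\mathbb{R}$.
   Context: $\mathcal{H}$ is a finite-dimensional real Hilbert space with inner product $\langle\cdot,\cdot\rangle$; $\mathcal{X}$ is a measurable space (Borel $\sigma$-algebra) with a measure $m$; $\mathcal{P}(\mathcal{X},m)$ is the set of probability distributions having a density with respect to $m$ (identified with their densities). For a density $p$ and measurable $f$ (possibly $\mathcal H$-valued), $p(f)=\int f(x)p(x)\,m(dx)$. Conventions: $\log s=-\infty$ for $s\le 0$ and $\exp(-\infty)=0$. The coupling is $c_\lambda(u,v)=\frac1\lambda\log(1+\lambda\langle u,v\rangle)$ for $\lambda\neq0$ and $c_0(u,v)=\langle u,v\rangle$. Given a measurable $T:\mathcal X\to\mathcal H$, the $\lambda$-log-partition function is $\varphi_\lambda(\vartheta)=\log\int\exp(c_\lambda(\vartheta,T(x)))\,m(dx)$, $\operatorname{dom}\varphi_\lambda=\{\vartheta\in\mathcal H:\varphi_\lambda(\vartheta)<+\infty\}$, and for $\vartheta\in\operatorname{dom}\varphi_\lambda$, $q_\vartheta(x)=\exp(c_\lambda(\vartheta,T(x))-\varphi_\lambda(\vartheta))$;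 $\mathcal Q_\lambda=\{q_\vartheta:\vartheta\in\operatorname{dom}\varphi_\lambda\}$. $\varphi_\lambda$ proper means it never takes the value $-\infty$ and $\operatorname{dom}\varphi_\lambda\neq\emptyset$. The support of $q_\vartheta$ is $S_\vartheta=\{x\in\mathcal X:1+\lambda\langle\vartheta,T(x)\rangle>0\}$ (equal to $\mathcal X$ when $\lambda=0$). For $Y\subset\mathcal X$, $p_{|Y}=p\,\mathbf 1_Y$ is the restriction of $p$ to $Y$. For $\alpha>0$ the escort of a nonnegative function $p$ is $p^{(\alpha)}=p^\alpha/\int p^\alpha\,dm$ (when the normalizing constant is finite and positive), and $p^{(\alpha)}_{|Y}$ denotes the escort of $p_{|Y}$. A density $p$ is $q_\vartheta$-compatible if $\int p_{|S_\vartheta}(x)^\alpha m(dx)\in(0,+\infty)$ and $\int T(x)p_{|S_\vartheta}(x)^\alpha m(dx)$ has finite components. *)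

theory Defs
  imports "HOL-Analysis.Analysis" "HOL-Probability.Probability"
begin

definition eln :: "real \<Rightarrow> ereal" where
  "eln s = (if s > 0 then ereal (ln s) else -\<infinity>)"

definition eexp :: "ereal \<Rightarrow> ennreal" where
  "eexp t = (if t = -\<infinity> then 0 else if t = \<infinity> then \<infinity> else ennreal (exp (real_of_ereal t)))"

definition coupling :: "real \<Rightarrow> 'h::real_inner \<Rightarrow> 'h \<Rightarrow> ereal" where
  "coupling l u v = (if l = 0 then ereal (u \<bullet> v) else ereal (1 / l) * eln (1 + l * (u \<bullet> v)))"

definition log_partition :: "real \<Rightarrow> 'x measure \<Rightarrow> ('x \<Rightarrow> 'h::real_inner) \<Rightarrow> 'h \<Rightarrow> ereal" where
  "log_partition l M T \<theta> =
     (let I = (\<integral>\<^sup>+ x. eexp (coupling l \<theta> (T x)) \<partial>M) in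
      if I = 0 then -\<infinity> else if I = \<infinity> then \<infinity> else ereal (ln (enn2real I)))"

definition dom_lp :: "real \<Rightarrow> 'x measure \<Rightarrow> ('x \<Rightarrow> 'h::real_inner) \<Rightarrow> 'h set" where
  "dom_lp l M T = {\<theta>. log_partition l M T \<theta> < \<infinity>}"

definition proper_lp :: "real \<Rightarrow> 'x measure \<Rightarrow> ('x \<Rightarrow> 'h::real_inner) \<Rightarrow> bool" where
  "proper_lp l M T \<longleftrightarrow> (\<forall>\<theta>. log_partition l M T \<theta> \<noteq> -\<infinity>) \<and> dom_lp l M T \<noteq> {}"

definition supp_q :: "real \<Rightarrow> 'x measure \<Rightarrow> ('x \<Rightarrow> 'h::real_inner) \<Rightarrow> 'h \<Rightarrow> 'x set" where
  "supp_q l M T \<theta> = {x \<in> space M. 1 + l * (\<theta> \<bullet> T x) > 0}"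

definition densities :: "'x measure \<Rightarrow> ('x \<Rightarrow> real) set" where
  "densities M = {p. p \<in> borel_measurable M \<and> (\<forall>x\<in>space M. 0 \<le> p x) \<and>
                       (\<integral>\<^sup>+ x. ennreal (p x) \<partial>M) = 1}"

definition restr :: "('x \<Rightarrow> real) \<Rightarrow> 'x set \<Rightarrow> 'x \<Rightarrow> real" where
  "restr p Y x = p x * indicator Y x"

definition escort :: "'x measure \<Rightarrow> real \<Rightarrow> ('x \<Rightarrow> real) \<Rightarrow> 'x \<Rightarrow> real" where
  "escort M a p x = p x powr a / enn2real (\<integral>\<^sup>+ y. ennreal (p y powr a) \<partial>M)"

definition compatible :: "real \<Rightarrow> 'x measure \<Rightarrow> ('x \<Rightarrow> 'h::euclidean_space) \<Rightarrow> 'h \<Rightarrow> ('x \<Rightarrow> real) \<Rightarrow> bool" where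
  "compatible l M T \<theta> p \<longleftrightarrow>
     (let a = 1 - l; q = restr p (supp_q l M T \<theta>) in
       0 < (\<integral>\<^sup>+ x. ennreal (q x powr a) \<partial>M) \<and> (\<integral>\<^sup>+ x. ennreal (q x powr a) \<partial>M) < \<infinity> \<and>
       (\<forall>b\<in>Basis. integrable M (\<lambda>x. (T x \<bullet> b) * q x powr a)))"

end

theory Submission
  imports Defs
begin

lemma integrable_euclid_comp:
  fixes g :: "'a \<Rightarrow> 'h::euclidean_space"
  assumes "\<And>b. b \<in> Basis \<Longrightarrow> integrable M (\<lambda>x. g x \<bullet> b)"
  shows "integrable M g"
proof -
  have "\<And>b. b \<in> Basis \<Longrightarrow> integrable M (\<lambda>x. (g x \<bullet> b) *\<^sub>R b)"
    using assms by (rule integrable_scaleR_left)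
  then have "integrable M (\<lambda>x. \<Sum>b\<in>Basis. (g x \<bullet> b) *\<^sub>R b)"
    by (rule Bochner_Integration.integrable_sum)
  then show ?thesis by (simp add: euclidean_representation)
qed

theorem lemma1:
  fixes l :: real and M :: "'x measure" and T :: "'x \<Rightarrow> 'h::euclidean_space"
    and \<theta> :: 'h and p :: "'x \<Rightarrow> real"
  assumes "T \<in> borel_measurable M"
    and "1 - l > 0"
    and "proper_lp l M T"
    and "\<theta> \<in> dom_lp l M T"
    and "p \<in> densities M"
    and "compatible l M T \<theta> p"
  shows "coupling l \<theta>
           (\<integral>x. escort M (1 - l) (restr p (supp_q l M T \<theta>)) x *\<^sub>R T x \<partial>M) \<noteq> \<infinity>
      \<and> coupling l \<theta>
           (\<integral>x. escort M (1 - l) (restr p (supp_q l M T \<theta>)) x *\<^sub>R T x \<partial>M) \<noteq> -\<infinity>"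
proof -
  define S where "S = supp_q l M T \<theta>"
  define q where "q = restr p S"
  define a where "a = 1 - l"
  define f where "f x = q x powr a" for x
  define N where "N = (\<integral>\<^sup>+ x. ennreal (f x) \<partial>M)"
  define Z where "Z = enn2real N"
  have Tm[measurable]: "T \<in> borel_measurable M" by fact
  have pm[measurable]: "p \<in> borel_measurable M" and p0: "\<And>x. x \<in> space M \<Longrightarrow> 0 \<le> p x"
    using assms(5) by (auto simp: densities_def)
  have Sm[measurable]: "S \<in> sets M"
    unfolding S_def supp_q_def by measurable
  have qm[measurable]: "q \<in> borel_measurable M"
    unfolding q_def restr_def by measurable
  have fm[measurable]: "f \<in> borel_measurable M"
    unfolding f_def by measurable
  have f0: "0 \<le> f x" for x unfolding f_def by simp
  have comp: "0 < N" "N < \<infinity>" "\<And>b. b \<in> Basis \<Longrightarrow> integrable M (\<lambda>x. (T x \<bullet> b) * f x)"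
    using assms(6) unfolding compatible_def N_def f_def q_def S_def a_def Let_def by auto
  have fint: "integrable M f"
    using comp by (intro integrableI_nonneg) (auto simp: f0 N_def)
  have intf: "integral\<^sup>L M f = Z"
    unfolding Z_def N_def by (rule integral_eq_nn_integral) (auto simp: f0)
  have Zpos: "Z > 0"
    using comp unfolding Z_def
    by (simp add: enn2real_positive_iff)
  have fS: "f x \<noteq> 0 \<Longrightarrow> x \<in> space M \<Longrightarrow> 1 + l * (\<theta> \<bullet> T x) > 0" for x
    unfolding f_def q_def restr_def S_def supp_q_def by (auto simp: indicator_def)
  have esc: "escort M (1 - l) (restr p (supp_q l M T \<theta>)) x = f x / Z" for x
    unfolding escort_def Z_def N_def f_def q_def S_def a_def by simp
  define g where "g x = (f x / Z) *\<^sub>R T x" for x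
  have gint: "integrable M g"
  proof (rule integrable_euclid_comp)
    fix b :: 'h assume "b \<in> Basis"
    then have "integrable M (\<lambda>x. ((T x \<bullet> b) * f x) / Z)"
      using comp(3) by auto
    then show "integrable M (\<lambda>x. g x \<bullet> b)"
      by (simp add: g_def mult.commute)
  qed
  define v where "v = integral\<^sup>L M g"
  have thv: "\<theta> \<bullet> v = (\<integral>x. \<theta> \<bullet> g x \<partial>M)"
    unfolding v_def using gint by simp
  have hint: "integrable M (\<lambda>x. f x * (\<theta> \<bullet> T x))"
  proof -
    have eq: "(\<lambda>x. Z * (\<theta> \<bullet> g x)) = (\<lambda>x. f x * (\<theta> \<bullet> T x))"
      using Zpos by (auto simp: g_def inner_scaleR_right)
    show ?thesis unfolding eq[symmetric] using gint by auto
  qed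
  define h where "h x = f x * (1 + l * (\<theta> \<bullet> T x))" for x
  have heq: "h = (\<lambda>x. f x + l * (f x * (\<theta> \<bullet> T x)))"
    by (auto simp: h_def algebra_simps)
  have hint2: "integrable M h"
    unfolding heq using hint fint
    by (intro Bochner_Integration.integrable_add integrable_mult_right)
  have h0: "AE x in M. 0 \<le> h x"
  proof (rule AE_I2)
    fix x assume "x \<in> space M"
    then show "0 \<le> h x" unfolding h_def using fS[of x] f0[of x]
      by (cases "f x = 0") auto
  qed
  have "integral\<^sup>L M h \<noteq> 0"
  proof
    assume "integral\<^sup>L M h = 0"
    then have "AE x in M. h x = 0" using integral_nonneg_eq_0_iff_AE[OF hint2 h0] by simp
    then have "AE x in M. f x = 0"
      using AE_space by eventually_elim (use fS in \<open>force simp: h_def\<close>)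
    then have "N = 0" unfolding N_def by (simp add: nn_integral_0_iff_AE) (auto elim: AE_mp)
    with comp show False by simp
  qed
  then have hpos: "integral\<^sup>L M h > 0"
    using integral_nonneg_AE[OF h0] by linarith
  have "integral\<^sup>L M h = Z + l * Z * (\<theta> \<bullet> v)"
  proof -
    have "integral\<^sup>L M h = integral\<^sup>L M f + l * (\<integral>x. f x * (\<theta> \<bullet> T x) \<partial>M)"
      unfolding heq using hint fint by simp
    moreover have "(\<integral>x. f x * (\<theta> \<bullet> T x) \<partial>M) = Z * (\<theta> \<bullet> v)"
    proof -
      have "(\<integral>x. f x * (\<theta> \<bullet> T x) \<partial>M) = (\<integral>x. Z * (\<theta> \<bullet> g x) \<partial>M)"
        using Zpos by (intro Bochner_Integration.integral_cong) (auto simp: g_def inner_scaleR_right)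
      also have "\<dots> = Z * (\<theta> \<bullet> v)" using thv by simp
      finally show ?thesis .
    qed
    ultimately show ?thesis using intf by simp
  qed
  with hpos have "0 < Z * (1 + l * (\<theta> \<bullet> v))" by (simp add: algebra_simps)
  then have pos: "1 + l * (\<theta> \<bullet> v) > 0"
    using Zpos by (simp add: zero_less_mult_iff)
  have veq: "(\<integral>x. escort M (1 - l) (restr p (supp_q l M T \<theta>)) x *\<^sub>R T x \<partial>M) = v"
    unfolding v_def g_def esc ..
  show ?thesis unfolding veq coupling_def eln_def using pos by auto
qed


end
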